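(* Let $I$ be a nonempty set and $\mathbf{Lat}_I$ the category of $I$-complete lattices. Then $\mathbf{Lat}_I$ has 2-fold subobject decompositions over $I$: for any family $(L_i)_{i\in I}$ of $I$-complete lattices and any two $I$-complete sublattices $S,T$ of $\prod_{i\in I}L_i$, if for all $i,j\in I$ the images of $S$ and $T$ under the projection $\prod_{i\in I}L_i\to L_i\times L_j$ coincide, then $S=T$.
   Context: An $I$-complete lattice is a lattice in which every family $(x_i)_{i\in I}$ of elements has a meet and a join; a homomorphism of $I$-complete lattices is a map preserving meets and joins of $I$-indexed families; $\mathbf{Lat}_I$ is the resulting category. Products are computed componentwise and subobjects are $I$-complete sublattices (subsets closed under $I$-indexed meets and joins). *)

theory Defs
  imports "HOL-Library.FuncSet"
begin

definition is_lub :: "('a \<Rightarrow> 'a \<Rightarrow> bool) \<Rightarrow> 'a set \<Rightarrow> 'a set \<Rightarrow> 'a \<Rightarrow> bool" where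
  "is_lub le A X u \<longleftrightarrow> u \<in> A \<and> (\<forall>x\<in>X. le x u) \<and> (\<forall>v\<in>A. (\<forall>x\<in>X. le x v) \<longrightarrow> le u v)"

definition is_glb :: "('a \<Rightarrow> 'a \<Rightarrow> bool) \<Rightarrow> 'a set \<Rightarrow> 'a set \<Rightarrow> 'a \<Rightarrow> bool" where
  "is_glb le A X u \<longleftrightarrow> u \<in> A \<and> (\<forall>x\<in>X. le u x) \<and> (\<forall>v\<in>A. (\<forall>x\<in>X. le v x) \<longrightarrow> le v u)"

definition poset_on :: "'a set \<Rightarrow> ('a \<Rightarrow> 'a \<Rightarrow> bool) \<Rightarrow> bool" where
  "poset_on A le \<longleftrightarrow> (\<forall>x\<in>A. le x x)
     \<and> (\<forall>x\<in>A. \<forall>y\<in>A. le x y \<and> le y x \<longrightarrow> x = y)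
     \<and> (\<forall>x\<in>A. \<forall>y\<in>A. \<forall>z\<in>A. le x y \<and> le y z \<longrightarrow> le x z)"

definition lattice_on :: "'a set \<Rightarrow> ('a \<Rightarrow> 'a \<Rightarrow> bool) \<Rightarrow> bool" where
  "lattice_on A le \<longleftrightarrow> poset_on A le
     \<and> (\<forall>x\<in>A. \<forall>y\<in>A. (\<exists>u. is_lub le A {x, y} u) \<and> (\<exists>u. is_glb le A {x, y} u))"

definition I_complete_lattice :: "'i set \<Rightarrow> 'a set \<Rightarrow> ('a \<Rightarrow> 'a \<Rightarrow> bool) \<Rightarrow> bool" where
  "I_complete_lattice I A le \<longleftrightarrow> lattice_on A le
     \<and> (\<forall>x. (\<forall>k\<in>I. x k \<in> A) \<longrightarrow> (\<exists>u. is_lub le A (x ` I) u) \<and> (\<exists>u. is_glb le A (x ` I) u))"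

definition prod_carrier :: "'i set \<Rightarrow> ('i \<Rightarrow> 'a set) \<Rightarrow> ('i \<Rightarrow> 'a) set" where
  "prod_carrier I C = PiE I C"

definition prod_le :: "'i set \<Rightarrow> ('i \<Rightarrow> 'a \<Rightarrow> 'a \<Rightarrow> bool) \<Rightarrow> ('i \<Rightarrow> 'a) \<Rightarrow> ('i \<Rightarrow> 'a) \<Rightarrow> bool" where
  "prod_le I le f g \<longleftrightarrow> (\<forall>i\<in>I. le i (f i) (g i))"

definition I_complete_sublattice :: "'i set \<Rightarrow> 'a set \<Rightarrow> ('a \<Rightarrow> 'a \<Rightarrow> bool) \<Rightarrow> 'a set \<Rightarrow> bool" where
  "I_complete_sublattice I A le S \<longleftrightarrow> S \<subseteq> A
     \<and> (\<forall>x. (\<forall>k\<in>I. x k \<in> S) \<longrightarrow>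
            (\<forall>u. is_lub le A (x ` I) u \<longrightarrow> u \<in> S) \<and> (\<forall>u. is_glb le A (x ` I) u \<longrightarrow> u \<in> S))"

definition proj2 :: "'i \<Rightarrow> 'i \<Rightarrow> ('i \<Rightarrow> 'a) set \<Rightarrow> ('a \<times> 'a) set" where
  "proj2 i j S = (\<lambda>s. (s i, s j)) ` S"

end

theory Submission
  imports Defs
begin

lemma prod_glb_exists:
  assumes L: "\<forall>k\<in>I. I_complete_lattice I (C k) (le k)"
    and x: "\<forall>j\<in>I. x j \<in> PiE I C"
  obtains g where "is_glb (prod_le I le) (prod_carrier I C) (x ` I) g"
    and "\<forall>k\<in>I. is_glb (le k) (C k) ((\<lambda>j. x j k) ` I) (g k)"
proof -
  have ex: "\<exists>u. is_glb (le k) (C k) ((\<lambda>j. x j k) ` I) u" if "k \<in> I" for k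
  proof -
    have "\<forall>j\<in>I. x j k \<in> C k" using x that by (auto simp: PiE_iff)
    moreover have "I_complete_lattice I (C k) (le k)" using L that by blast
    ultimately show ?thesis unfolding I_complete_lattice_def
      by (metis (no_types, lifting))
  qed
  define g where "g = restrict (\<lambda>k. SOME u. is_glb (le k) (C k) ((\<lambda>j. x j k) ` I) u) I"
  have gk: "\<forall>k\<in>I. is_glb (le k) (C k) ((\<lambda>j. x j k) ` I) (g k)"
    using ex unfolding g_def by (auto intro: someI_ex)
  have gP: "g \<in> PiE I C" using gk unfolding g_def is_glb_def by (auto simp: PiE_iff)
  have "is_glb (prod_le I le) (prod_carrier I C) (x ` I) g"
    unfolding is_glb_def prod_carrier_def prod_le_def
  proof (intro conjI ballI impI)
    show "g \<in> PiE I C" by (rule gP)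
  next
    fix y i assume "y \<in> x ` I" "i \<in> I"
    then show "le i (g i) (y i)" using gk unfolding is_glb_def by auto
  next
    fix v i assume v: "v \<in> PiE I C" and lb: "\<forall>y\<in>x ` I. \<forall>i\<in>I. le i (v i) (y i)" and i: "i \<in> I"
    have "v i \<in> C i" using v i by auto
    moreover have "\<forall>z\<in>(\<lambda>j. x j i) ` I. le i (v i) z" using lb i by auto
    ultimately show "le i (v i) (g i)" using gk i unfolding is_glb_def by blast
  qed
  then show ?thesis using gk that by blast
qed

lemma sub_glb:
  assumes "I_complete_sublattice I A le S" "\<forall>k\<in>I. x k \<in> S" "is_glb le A (x ` I) u"
  shows "u \<in> S"
  using assms unfolding I_complete_sublattice_def by blast

lemma sub_lub:
  assumes "I_complete_sublattice I A le S" "\<forall>k\<in>I. x k \<in> S" "is_lub le A (x ` I) u"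
  shows "u \<in> S"
  using assms unfolding I_complete_sublattice_def by blast

lemma sub_half:
  fixes I :: "'i set" and C :: "'i \<Rightarrow> 'a set" and le :: "'i \<Rightarrow> 'a \<Rightarrow> 'a \<Rightarrow> bool"
    and S T :: "('i \<Rightarrow> 'a) set"
  assumes L: "\<forall>i\<in>I. I_complete_lattice I (C i) (le i)"
    and SS: "I_complete_sublattice I (prod_carrier I C) (prod_le I le) S"
    and TS: "I_complete_sublattice I (prod_carrier I C) (prod_le I le) T"
    and P: "\<forall>i\<in>I. \<forall>j\<in>I. proj2 i j S = proj2 i j T"
  shows "T \<subseteq> S"
proof
  fix t assume t: "t \<in> T"
  have tP: "t \<in> PiE I C" using TS t unfolding I_complete_sublattice_def prod_carrier_def by blast
  have SP: "S \<subseteq> PiE I C" using SS unfolding I_complete_sublattice_def prod_carrier_def by blast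
  have "\<exists>s\<in>S. s i = t i \<and> s j = t j" if "i \<in> I" "j \<in> I" for i j
  proof -
    have "(t i, t j) \<in> proj2 i j T" using t unfolding proj2_def by blast
    then have "(t i, t j) \<in> proj2 i j S" using P that by metis
    then show ?thesis unfolding proj2_def by auto
  qed
  then obtain s where s: "\<And>i j. i \<in> I \<Longrightarrow> j \<in> I \<Longrightarrow> s i j \<in> S \<and> s i j i = t i \<and> s i j j = t j"
    by metis
  have "\<forall>i\<in>I. \<exists>a. a \<in> S \<and> a i = t i \<and> (\<forall>k\<in>I. le k (a k) (t k))"
  proof
  fix i assume i: "i \<in> I"
  show "\<exists>a. a \<in> S \<and> a i = t i \<and> (\<forall>k\<in>I. le k (a k) (t k))"
  proof -
    have xP: "\<forall>j\<in>I. s i j \<in> PiE I C" using s i SP by blast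
    obtain g where g1: "is_glb (prod_le I le) (prod_carrier I C) (s i ` I) g"
      and g2: "\<forall>k\<in>I. is_glb (le k) (C k) ((\<lambda>j. s i j k) ` I) (g k)"
      using prod_glb_exists[OF L xP] by blast
    have "\<forall>k\<in>I. s i k \<in> S" using s i by blast
    then have gS: "g \<in> S" by (rule sub_glb[OF SS _ g1])
    have "(\<lambda>j. s i j i) ` I = {t i}"
    proof (intro equalityI subsetI)
      fix z assume "z \<in> (\<lambda>j. s i j i) ` I"
      then obtain j where "j \<in> I" "z = s i j i" by blast
      then show "z \<in> {t i}" using s[OF i, of j] by simp
    next
      fix z assume "z \<in> {t i}"
      then have "z = s i i i" using s[OF i i] by simp
      then show "z \<in> (\<lambda>j. s i j i) ` I" using i by blast
    qed
    note img = this
    have "is_glb (le i) (C i) ((\<lambda>j. s i j i) ` I) (g i)" using g2 i by (rule bspec)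
    then have gi: "is_glb (le i) (C i) {t i} (g i)" unfolding img .
    have tiC: "t i \<in> C i" using tP i by auto
    have "I_complete_lattice I (C i) (le i)" using L i by (rule bspec)
    then have po: "poset_on (C i) (le i)" by (simp add: I_complete_lattice_def lattice_on_def)
    have refl: "le i (t i) (t i)" using po tiC unfolding poset_on_def by blast
    have "le i (g i) (t i)" "g i \<in> C i"
      using gi unfolding is_glb_def by blast+
    moreover have "le i (t i) (g i)"
      using gi tiC refl unfolding is_glb_def by blast
    moreover have "\<forall>x\<in>C i. \<forall>y\<in>C i. le i x y \<and> le i y x \<longrightarrow> x = y"
      using po unfolding poset_on_def by blast
    ultimately have "g i = t i" using tiC by blast
    moreover have "\<forall>k\<in>I. le k (g k) (t k)"
    proof
      fix k assume k: "k \<in> I"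
      have "is_glb (le k) (C k) ((\<lambda>j. s i j k) ` I) (g k)" using g2 k by (rule bspec)
      then have "le k (g k) (s i k k)" using k unfolding is_glb_def by blast
      then show "le k (g k) (t k)" using s[OF i k] by simp
    qed
    ultimately show ?thesis using gS by blast
  qed
  qed
  then have "\<exists>a. \<forall>i\<in>I. a i \<in> S \<and> a i i = t i \<and> (\<forall>k\<in>I. le k (a i k) (t k))"
    by (rule bchoice)
  then obtain a where a0: "\<forall>i\<in>I. a i \<in> S \<and> a i i = t i \<and> (\<forall>k\<in>I. le k (a i k) (t k))"
    by (rule exE)
  have a: "a i \<in> S \<and> a i i = t i \<and> (\<forall>k\<in>I. le k (a i k) (t k))" if "i \<in> I" for i
    using a0 that by (rule bspec)
  have "is_lub (prod_le I le) (prod_carrier I C) (a ` I) t"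
    unfolding is_lub_def prod_carrier_def prod_le_def
  proof (intro conjI ballI impI)
    show "t \<in> PiE I C" by (rule tP)
  next
    fix y k assume y: "y \<in> a ` I" and k: "k \<in> I"
    then obtain i where i: "i \<in> I" and yi: "y = a i" by blast
    show "le k (y k) (t k)" using a[OF i] k yi by blast
  next
    fix v k assume ub: "\<forall>y\<in>a ` I. \<forall>k\<in>I. le k (y k) (v k)" and k: "k \<in> I"
    have "le k (a k k) (v k)" using ub k by auto
    then show "le k (t k) (v k)" using a k by auto
  qed
  moreover have "\<forall>k\<in>I. a k \<in> S" using a by blast
  ultimately show "t \<in> S" by (intro sub_lub[OF SS, of a])
qed

theorem proposition4p10:
  fixes I :: "'i set" and C :: "'i \<Rightarrow> 'a set" and le :: "'i \<Rightarrow> 'a \<Rightarrow> 'a \<Rightarrow> bool"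
    and S T :: "('i \<Rightarrow> 'a) set"
  assumes "I \<noteq> {}"
    and "\<forall>i\<in>I. I_complete_lattice I (C i) (le i)"
    and "I_complete_sublattice I (prod_carrier I C) (prod_le I le) S"
    and "I_complete_sublattice I (prod_carrier I C) (prod_le I le) T"
    and "\<forall>i\<in>I. \<forall>j\<in>I. proj2 i j S = proj2 i j T"
  shows "S = T"
proof
  show "T \<subseteq> S" by (rule sub_half[OF assms(2-5)])
  have "\<forall>i\<in>I. \<forall>j\<in>I. proj2 i j T = proj2 i j S" using assms(5) by simp
  then show "S \<subseteq> T" by (rule sub_half[OF assms(2,4,3)])
qed

end
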